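(* Let $G$ be a graph with no induced subgraph isomorphic to $C_4$. Then $G$ is localizable if and only if every vertex of $G$ is contained in exactly one simplicial clique of $G$.
   Context: A clique is strong if it intersects every maximal independent set. A graph is localizable if its vertex set admits a partition into strong cliques. A clique $C$ of $G$ is simplicial if there is a vertex $v\in V(G)$ with $C=N[v]$, the closed neighborhood of $v$. *)

theory Defs
  imports Main
begin

definition graph :: "'a set \<Rightarrow> ('a \<Rightarrow> 'a \<Rightarrow> bool) \<Rightarrow> bool" where
  "graph V E \<longleftrightarrow> finite V \<and> (\<forall>u v. E u v \<longrightarrow> E v u) \<and> (\<forall>v. \<not> E v v)
     \<and> (\<forall>u v. E u v \<longrightarrow> u \<in> V \<and> v \<in> V)"

definition clique :: "'a set \<Rightarrow> ('a \<Rightarrow> 'a \<Rightarrow> bool) \<Rightarrow> 'a set \<Rightarrow> bool" where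
  "clique V E C \<longleftrightarrow> C \<subseteq> V \<and> (\<forall>u\<in>C. \<forall>v\<in>C. u \<noteq> v \<longrightarrow> E u v)"

definition independent :: "'a set \<Rightarrow> ('a \<Rightarrow> 'a \<Rightarrow> bool) \<Rightarrow> 'a set \<Rightarrow> bool" where
  "independent V E I \<longleftrightarrow> I \<subseteq> V \<and> (\<forall>u\<in>I. \<forall>v\<in>I. \<not> E u v)"

definition maximal_independent :: "'a set \<Rightarrow> ('a \<Rightarrow> 'a \<Rightarrow> bool) \<Rightarrow> 'a set \<Rightarrow> bool" where
  "maximal_independent V E I \<longleftrightarrow> independent V E I \<and>
     (\<forall>J. independent V E J \<and> I \<subseteq> J \<longrightarrow> J = I)"

definition strong_clique :: "'a set \<Rightarrow> ('a \<Rightarrow> 'a \<Rightarrow> bool) \<Rightarrow> 'a set \<Rightarrow> bool" where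
  "strong_clique V E C \<longleftrightarrow> clique V E C \<and>
     (\<forall>I. maximal_independent V E I \<longrightarrow> C \<inter> I \<noteq> {})"

definition is_partition :: "'a set \<Rightarrow> 'a set set \<Rightarrow> bool" where
  "is_partition V P \<longleftrightarrow> \<Union>P = V \<and> {} \<notin> P \<and>
     (\<forall>A\<in>P. \<forall>B\<in>P. A \<noteq> B \<longrightarrow> A \<inter> B = {})"

definition localizable :: "'a set \<Rightarrow> ('a \<Rightarrow> 'a \<Rightarrow> bool) \<Rightarrow> bool" where
  "localizable V E \<longleftrightarrow> (\<exists>P. is_partition V P \<and> (\<forall>C\<in>P. strong_clique V E C))"

definition closed_nbhd :: "'a set \<Rightarrow> ('a \<Rightarrow> 'a \<Rightarrow> bool) \<Rightarrow> 'a \<Rightarrow> 'a set" where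
  "closed_nbhd V E v = insert v {u\<in>V. E v u}"

definition simplicial_clique :: "'a set \<Rightarrow> ('a \<Rightarrow> 'a \<Rightarrow> bool) \<Rightarrow> 'a set \<Rightarrow> bool" where
  "simplicial_clique V E C \<longleftrightarrow> clique V E C \<and> (\<exists>v\<in>V. C = closed_nbhd V E v)"

definition C4_free :: "'a set \<Rightarrow> ('a \<Rightarrow> 'a \<Rightarrow> bool) \<Rightarrow> bool" where
  "C4_free V E \<longleftrightarrow> \<not> (\<exists>a\<in>V. \<exists>b\<in>V. \<exists>c\<in>V. \<exists>d\<in>V. distinct [a,b,c,d] \<and>
     E a b \<and> E b c \<and> E c d \<and> E d a \<and> \<not> E a c \<and> \<not> E b d)"

end

theory Submission
  imports Defs
begin

lemma simplicial_strong:
  assumes g: "graph V E" and s: "simplicial_clique V E C"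
  shows "strong_clique V E C"
proof -
  from s obtain v where v: "v \<in> V" "C = closed_nbhd V E v" and cl: "clique V E C"
    unfolding simplicial_clique_def by blast
  have "C \<inter> I \<noteq> {}" if mi: "maximal_independent V E I" for I
  proof
    assume e: "C \<inter> I = {}"
    have vC: "v \<in> C" using v unfolding closed_nbhd_def by auto
    have nE: "\<not> E v u" if "u \<in> I" for u
      using that e mi v unfolding closed_nbhd_def maximal_independent_def independent_def by auto
    have "independent V E (insert v I)"
      using mi nE g v(1) unfolding maximal_independent_def independent_def graph_def by blast
    hence "insert v I = I" using mi unfolding maximal_independent_def by blast
    thus False using e vC by auto
  qed
  thus ?thesis using cl unfolding strong_clique_def by blast
qed

lemma strong_simplicial:
  assumes g: "graph V E" and c4: "C4_free V E" and s: "strong_clique V E C"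
  shows "\<exists>w\<in>C. closed_nbhd V E w = C"
proof (rule ccontr)
  assume na: "\<not> ?thesis"
  have cl: "clique V E C" using s unfolding strong_clique_def by blast
  have CV: "C \<subseteq> V" using cl unfolding clique_def by blast
  have fin: "finite V" and sym: "\<And>u v. E u v \<Longrightarrow> E v u" and irr: "\<And>v. \<not> E v v"
    and inV: "\<And>u v. E u v \<Longrightarrow> u \<in> V \<and> v \<in> V" using g unfolding graph_def by auto
  define Out where "Out = V - C"
  define f where "f y = {c\<in>C. E y c}" for y
  have out: "\<exists>y\<in>Out. E y c" if cC: "c \<in> C" for c
  proof -
    have "C \<subseteq> closed_nbhd V E c" using cl cC CV unfolding clique_def closed_nbhd_def by auto
    moreover have "closed_nbhd V E c \<noteq> C" using na cC by blast
    ultimately obtain y where "y \<in> closed_nbhd V E c" "y \<notin> C" by blast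
    hence "y \<in> V" "E c y" "y \<notin> C" using cC unfolding closed_nbhd_def by auto
    thus ?thesis using sym unfolding Out_def by blast
  qed
  define M where "M = {x\<in>Out. \<forall>y\<in>Out. f x \<subseteq> f y \<longrightarrow> f y = f x}"
  have cover: "\<exists>x\<in>M. c \<in> f x" if cC: "c \<in> C" for c
  proof -
    obtain y where y: "y \<in> Out" "E y c" using out cC by blast
    have "finite (f ` Out)" using fin unfolding Out_def by simp
    from finite_has_maximal2[OF this, of "f y"] y(1)
    obtain m where m: "m \<in> f ` Out" "f y \<subseteq> m" "\<forall>b\<in>f ` Out. m \<subseteq> b \<longrightarrow> m = b" by auto
    then obtain z where z: "z \<in> Out" "m = f z" by blast
    have "z \<in> M" using z m unfolding M_def by auto
    moreover have "c \<in> f z" using m z y cC unfolding f_def by auto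
    ultimately show ?thesis by blast
  qed
  have comp: "f x \<subseteq> f y \<or> f y \<subseteq> f x" if xy: "x \<in> Out" "y \<in> Out" "E x y" for x y
  proof (rule ccontr)
    assume "\<not> ?thesis"
    then obtain a c where a: "a \<in> f x" "a \<notin> f y" and c: "c \<in> f y" "c \<notin> f x" by blast
    have aC: "a \<in> C" "E x a" "\<not> E y a" using a unfolding f_def by auto
    have cC: "c \<in> C" "E y c" "\<not> E x c" using c unfolding f_def by auto
    have "a \<noteq> c" using aC cC by auto
    hence "E a c" using cl aC cC unfolding clique_def by blast
    have "x \<noteq> y" using xy irr by auto
    have nay: "\<not> E a y" using sym aC by blast
    have ecy: "E c y" "E y x" using sym cC xy by blast+
    have "x \<in> V" "y \<in> V" using xy unfolding Out_def by auto
    moreover have "x \<notin> C" "y \<notin> C" using xy unfolding Out_def by auto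
    ultimately have "\<exists>a\<in>V. \<exists>b\<in>V. \<exists>c\<in>V. \<exists>d\<in>V. distinct [a,b,c,d] \<and>
     E a b \<and> E b c \<and> E c d \<and> E d a \<and> \<not> E a c \<and> \<not> E b d"
    proof -
      have "a \<in> V" "c \<in> V" using aC cC CV by auto
      moreover have "distinct [x,a,c,y]" using aC cC \<open>a \<noteq> c\<close> \<open>x \<noteq> y\<close> xy
        unfolding Out_def by auto
      ultimately show ?thesis using \<open>x \<in> V\<close> \<open>y \<in> V\<close> aC cC nay ecy \<open>E a c\<close> by blast
    qed
    thus False using c4 unfolding C4_free_def by blast
  qed
  have finP: "finite {J. J \<subseteq> M \<and> independent V E J}"
    by (rule finite_subset[of _ "Pow V"]) (auto simp: M_def Out_def fin)
  from finite_has_maximal2[OF finP, of "{}"]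
  obtain I where I: "I \<subseteq> M" "independent V E I"
    "\<forall>J\<in>{J. J \<subseteq> M \<and> independent V E J}. I \<subseteq> J \<longrightarrow> I = J"
    by (auto simp: independent_def)
  have dom: "\<exists>z\<in>I. E z c" if cC: "c \<in> C" for c
  proof -
    obtain x where x: "x \<in> M" "c \<in> f x" using cover cC by blast
    show ?thesis
    proof (cases "x \<in> I")
      case True thus ?thesis using x unfolding f_def by auto
    next
      case False
      have "\<not> independent V E (insert x I)"
      proof
        assume "independent V E (insert x I)"
        moreover have "insert x I \<subseteq> M" using I(1) x(1) by blast
        ultimately have "I = insert x I" using I(3) by blast
        thus False using False by auto
      qed
      moreover have "x \<in> V" using x unfolding M_def Out_def by auto
      ultimately obtain z where z: "z \<in> I" "E x z \<or> E z x"
        using I(2) irr unfolding independent_def by auto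
      hence ez: "E x z" using sym by blast
      have xO: "x \<in> Out" and zO: "z \<in> Out" using x z I unfolding M_def by auto
      have "f x = f z"
        using comp[OF xO zO ez] x(1) z(1) I(1) xO zO unfolding M_def by blast
      thus ?thesis using x z unfolding f_def by auto
    qed
  qed
  have finI: "finite {J. independent V E J}"
    by (rule finite_subset[of _ "Pow V"]) (auto simp: independent_def fin)
  from finite_has_maximal2[OF finI, of I] I(2)
  obtain I' where I': "independent V E I'" "I \<subseteq> I'"
    "\<forall>J\<in>{J. independent V E J}. I' \<subseteq> J \<longrightarrow> I' = J" by auto
  have "maximal_independent V E I'" using I' unfolding maximal_independent_def by auto
  hence "C \<inter> I' \<noteq> {}" using s unfolding strong_clique_def by blast
  then obtain c where "c \<in> C" "c \<in> I'" by blast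
  moreover then obtain z where "z \<in> I" "E z c" using dom by blast
  ultimately show False using I' unfolding independent_def by blast
qed

theorem mainTheorem10:
  fixes V :: "'a set" and E :: "'a \<Rightarrow> 'a \<Rightarrow> bool"
  assumes "graph V E" and "C4_free V E"
  shows "localizable V E \<longleftrightarrow>
    (\<forall>v\<in>V. \<exists>!C. simplicial_clique V E C \<and> v \<in> C)"
proof
  assume "localizable V E"
  then obtain P where P: "is_partition V P" "\<forall>C\<in>P. strong_clique V E C"
    unfolding localizable_def by blast
  have simpP: "simplicial_clique V E C" if "C \<in> P" for C
  proof -
    have sc: "strong_clique V E C" using P that by blast
    hence cl: "clique V E C" unfolding strong_clique_def by blast
    obtain w where "w \<in> C" "closed_nbhd V E w = C"
      using strong_simplicial[OF assms sc] by blast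
    thus ?thesis using cl unfolding simplicial_clique_def clique_def by blast
  qed
  have inP: "C' \<in> P" if sc: "simplicial_clique V E C'" for C'
  proof -
    obtain u where u: "u \<in> V" "C' = closed_nbhd V E u" and cl': "clique V E C'"
      using sc unfolding simplicial_clique_def by blast
    obtain D where D: "D \<in> P" "u \<in> D" using P(1) u unfolding is_partition_def by blast
    have sD: "simplicial_clique V E D" using simpP D by blast
    then obtain w where w: "w \<in> V" "D = closed_nbhd V E w" and clD: "clique V E D"
      unfolding simplicial_clique_def by blast
    have DC: "D \<subseteq> C'" using clD D u unfolding clique_def closed_nbhd_def by auto
    have wD: "w \<in> D" using w unfolding closed_nbhd_def by auto
    have "C' \<subseteq> D" using cl' DC wD w unfolding clique_def closed_nbhd_def by auto
    thus ?thesis using DC D by auto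
  qed
  show "\<forall>v\<in>V. \<exists>!C. simplicial_clique V E C \<and> v \<in> C"
  proof
    fix v assume "v \<in> V"
    then obtain D where D: "D \<in> P" "v \<in> D" using P(1) unfolding is_partition_def by blast
    show "\<exists>!C. simplicial_clique V E C \<and> v \<in> C"
    proof (rule ex1I[of _ D])
      show "simplicial_clique V E D \<and> v \<in> D" using simpP D by blast
      fix C assume "simplicial_clique V E C \<and> v \<in> C"
      hence "C \<in> P" "v \<in> C" using inP by auto
      thus "C = D" using D P(1) unfolding is_partition_def by blast
    qed
  qed
next
  assume H: "\<forall>v\<in>V. \<exists>!C. simplicial_clique V E C \<and> v \<in> C"
  define P where "P = {C. simplicial_clique V E C}"
  have "is_partition V P"
    unfolding is_partition_def
  proof (intro conjI ballI impI)
    show "\<Union>P = V"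
    proof
      show "\<Union>P \<subseteq> V" unfolding P_def simplicial_clique_def clique_def by blast
      show "V \<subseteq> \<Union>P" using H unfolding P_def by blast
    qed
    show "{} \<notin> P" unfolding P_def simplicial_clique_def closed_nbhd_def by auto
    fix A B assume AB: "A \<in> P" "B \<in> P" "A \<noteq> B"
    show "A \<inter> B = {}"
    proof (rule ccontr)
      assume "A \<inter> B \<noteq> {}"
      then obtain x where x: "x \<in> A" "x \<in> B" by blast
      hence "x \<in> V" using AB unfolding P_def simplicial_clique_def clique_def by blast
      thus False using H x AB unfolding P_def by blast
    qed
  qed
  moreover have "\<forall>C\<in>P. strong_clique V E C"
    using simplicial_strong[OF assms(1)] unfolding P_def by blast
  ultimately show "localizable V E" unfolding localizable_def by blast
qed

end
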